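(* Let $\alpha\in[0,1]$ be irrational, $n\geq 2$, and $\alpha_n=\frac{p_n}{q_n}$ the $n$-th rational approximant to $\alpha$. Let $k_0\in\mathbb{Z}$ with $q_{n-1}\ge|k_0|$ and set $\theta:=k_0\alpha\bmod 1$. Then for all $-q_n+1\le k\le q_n-2$: (a) if $k_0>0$ and $n$ is even, $v_{\alpha_n,\theta}(k)=v_{\alpha,\theta}(k)$; (b) if $k_0>0$ and $n$ is odd, $v_{\alpha_n,\theta}(k)=\widetilde v_{\alpha,\theta}(k)$; (c) if $k_0<0$ and $n$ is even, $v_{\alpha_n,\theta}(k)=\widetilde v_{\alpha,\theta}(k)$; (d) if $k_0<0$ and $n$ is odd, $v_{\alpha_n,\theta}(k)=v_{\alpha,\theta}(k)$.
   Context: For $\beta\in[0,1]$, $\theta\in[0,1)$: $v_{\beta,\theta}(k)=\chi_{[1-\beta,1)}(k\beta+\theta\bmod 1)$ and $\widetilde v_{\beta,\theta}(k)=\chi_{(1-\beta,1]\cup\{0\}}(k\beta+\theta\bmod 1)$. Rational approximants: for $\alpha=[a_1,a_2,\dots]$, $p_{-1}=1,p_0=0,p_n=a_np_{n-1}+p_{n-2}$, $q_{-1}=0,q_0=1,q_n=a_nq_{n-1}+q_{n-2}$, $\alpha_n=p_n/q_n$. *)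

theory Defs
  imports Complex_Main "HOL-Library.Indicator_Function"
begin

definition v_seq :: "real \<Rightarrow> real \<Rightarrow> int \<Rightarrow> real" where
  "v_seq \<beta> \<theta> k = indicator {1 - \<beta>..<1} (frac (real_of_int k * \<beta> + \<theta>))"

definition vt_seq :: "real \<Rightarrow> real \<Rightarrow> int \<Rightarrow> real" where
  "vt_seq \<beta> \<theta> k = indicator ({1 - \<beta><..1} \<union> {0}) (frac (real_of_int k * \<beta> + \<theta>))"

text \<open>Continued fraction expansion alpha = [a_1, a_2, ...] via the Gauss map:
  cf_rem alpha n is the n-th remainder, a_n = floor (1 / cf_rem alpha (n-1)).\<close>
fun cf_rem :: "real \<Rightarrow> nat \<Rightarrow> real" where
  "cf_rem \<alpha> 0 = \<alpha>"
| "cf_rem \<alpha> (Suc n) = frac (1 / cf_rem \<alpha> n)"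

definition cf_a :: "real \<Rightarrow> nat \<Rightarrow> int" where
  "cf_a \<alpha> n = \<lfloor>1 / cf_rem \<alpha> (n - 1)\<rfloor>"

text \<open>p_n, q_n for n >= 0 (p_{-1}=1, q_{-1}=0 built into the n=1 step).\<close>
fun cf_p :: "real \<Rightarrow> nat \<Rightarrow> int" where
  "cf_p \<alpha> 0 = 0"
| "cf_p \<alpha> (Suc 0) = cf_a \<alpha> 1 * 0 + 1"
| "cf_p \<alpha> (Suc (Suc n)) = cf_a \<alpha> (n + 2) * cf_p \<alpha> (Suc n) + cf_p \<alpha> n"

fun cf_q :: "real \<Rightarrow> nat \<Rightarrow> int" where
  "cf_q \<alpha> 0 = 1"
| "cf_q \<alpha> (Suc 0) = cf_a \<alpha> 1 * 1 + 0"
| "cf_q \<alpha> (Suc (Suc n)) = cf_a \<alpha> (n + 2) * cf_q \<alpha> (Suc n) + cf_q \<alpha> n"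

definition cf_approx :: "real \<Rightarrow> nat \<Rightarrow> real" where
  "cf_approx \<alpha> n = real_of_int (cf_p \<alpha> n) / real_of_int (cf_q \<alpha> n)"

end

theory Submission
  imports Defs
begin

lemma rem_props:
  assumes "\<alpha> \<notin> \<rat>" "0 < \<alpha>" "\<alpha> < 1"
  shows "cf_rem \<alpha> i \<notin> \<rat> \<and> 0 < cf_rem \<alpha> i \<and> cf_rem \<alpha> i < 1"
proof (induction i)
  case 0
  then show ?case using assms by simp
next
  case (Suc i)
  define r where "r = cf_rem \<alpha> i"
  have r: "r \<notin> \<rat>" "0 < r" "r < 1" using Suc r_def by auto
  have i1: "1 / r \<notin> \<rat>"
  proof
    assume "1 / r \<in> \<rat>"
    then have "1 / (1 / r) \<in> \<rat>" by (rule Rats_divide[OF Rats_1])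
    then show False using r by simp
  qed
  have i2: "frac (1 / r) \<notin> \<rat>"
  proof
    assume "frac (1 / r) \<in> \<rat>"
    then have "frac (1 / r) + of_int \<lfloor>1/r\<rfloor> \<in> \<rat>" by (simp add: Rats_add)
    then show False using i1 by (simp add: frac_def)
  qed
  have "frac (1/r) \<noteq> 0" using i2 by (metis Rats_0)
  then have "0 < frac (1/r)" using frac_ge_0 by (metis order_le_less)
  then show ?case using i2 frac_lt_1 by (simp add: r_def)
qed

lemma a_pos:
  assumes "\<alpha> \<notin> \<rat>" "0 < \<alpha>" "\<alpha> < 1" "i \<ge> 1"
  shows "cf_a \<alpha> i \<ge> 1"
proof -
  define r where "r = cf_rem \<alpha> (i - 1)"
  have r: "0 < r" "r < 1" using rem_props[OF assms(1-3)] r_def by auto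
  have "1 / r > 1" using r by simp
  then show ?thesis unfolding cf_a_def r_def[symmetric] by linarith
qed

lemma pq_props:
  assumes "\<alpha> \<notin> \<rat>" "0 < \<alpha>" "\<alpha> < 1"
  shows "cf_q \<alpha> i \<ge> 1 \<and> cf_p \<alpha> i \<ge> 0 \<and> cf_p \<alpha> i \<le> cf_q \<alpha> i
       \<and> cf_q \<alpha> (Suc i) \<ge> 1 \<and> cf_p \<alpha> (Suc i) \<ge> 0 \<and> cf_p \<alpha> (Suc i) \<le> cf_q \<alpha> (Suc i)"
proof (induction i)
  case 0
  then show ?case using a_pos[OF assms, of 1] by simp
next
  case (Suc i)
  have a: "cf_a \<alpha> (i + 2) \<ge> 1" using a_pos[OF assms, of "i+2"] by simp
  have "cf_q \<alpha> (Suc (Suc i)) \<ge> 1 \<and> cf_p \<alpha> (Suc (Suc i)) \<ge> 0 \<and> cf_p \<alpha> (Suc (Suc i)) \<le> cf_q \<alpha> (Suc (Suc i))"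
  proof -
    have "cf_a \<alpha> (i + 2) * cf_p \<alpha> (Suc i) \<le> cf_a \<alpha> (i + 2) * cf_q \<alpha> (Suc i)"
      using Suc a by (intro mult_left_mono) auto
    moreover have "cf_a \<alpha> (i + 2) * cf_q \<alpha> (Suc i) \<ge> 1" 
      using Suc a mult_mono[of 1 "cf_a \<alpha> (i + 2)" 1 "cf_q \<alpha> (Suc i)"] by simp
    moreover have "cf_a \<alpha> (i + 2) * cf_p \<alpha> (Suc i) \<ge> 0" using Suc a by simp
    ultimately show ?thesis using Suc by simp
  qed
  then show ?case using Suc by simp
qed

lemma det:
  "cf_p \<alpha> (Suc i) * cf_q \<alpha> i - cf_p \<alpha> i * cf_q \<alpha> (Suc i) = (-1) ^ i"
proof (induction i)
  case 0
  then show ?case by simp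
next
  case (Suc i)
  then show ?case by (simp add: algebra_simps)
qed

lemma frac_subst:
  fixes p p' q q' X :: real
  assumes "X > 0" "q * X + q' > 0"
  shows "(p + p' * (1 / X)) / (q + q' * (1 / X)) = (p * X + p') / (q * X + q')"
proof -
  have "p + p' * (1 / X) = (p * X + p') / X" using assms by (simp add: field_simps)
  moreover have "q + q' * (1 / X) = (q * X + q') / X" using assms by (simp add: field_simps)
  ultimately show ?thesis using assms by simp
qed

lemma repr:
  assumes "\<alpha> \<notin> \<rat>" "0 < \<alpha>" "\<alpha> < 1"
  shows "\<alpha> = (cf_p \<alpha> (Suc i) + cf_p \<alpha> i * cf_rem \<alpha> (Suc i)) /
              (cf_q \<alpha> (Suc i) + cf_q \<alpha> i * cf_rem \<alpha> (Suc i))"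
proof (induction i)
  case 0
  have "of_int \<lfloor>1/\<alpha>\<rfloor> + frac (1/\<alpha>) = 1/\<alpha>" by (simp add: frac_def)
  then have "\<alpha> = 1 / (of_int \<lfloor>1/\<alpha>\<rfloor> + frac (1/\<alpha>))" using assms by simp
  then show ?case by (simp add: cf_a_def add.commute)
next
  case (Suc i)
  define t where "t = cf_rem \<alpha> (Suc i)"
  define t' where "t' = cf_rem \<alpha> (Suc (Suc i))"
  define a where "a = cf_a \<alpha> (i + 2)"
  have tp: "0 < t" using rem_props[OF assms, of "Suc i"] unfolding t_def by blast
  have t'p: "0 < t'" using rem_props[OF assms, of "Suc (Suc i)"] unfolding t'_def by blast
  have aa: "a = \<lfloor>1/t\<rfloor>" by (simp add: a_def cf_a_def t_def)
  have tt: "t' = frac (1/t)" by (simp add: t'_def t_def)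
  have X: "of_int a + t' = 1 / t" unfolding aa tt by (simp add: frac_def)
  have t_eq: "t = 1 / (of_int a + t')" using X tp by simp
  have qpos: "cf_q \<alpha> (Suc i) \<ge> 1" "cf_q \<alpha> i \<ge> 1" using pq_props[OF assms, of i] by auto
  have apos: "a \<ge> 1" using a_pos[OF assms, of "i+2"] a_def by simp
  have d1: "of_int a + t' > 0" using apos t'p by simp
  have "\<alpha> = (cf_p \<alpha> (Suc i) + cf_p \<alpha> i * t) / (cf_q \<alpha> (Suc i) + cf_q \<alpha> i * t)"
    using Suc t_def by simp
  also have "\<dots> = (cf_p \<alpha> (Suc i) * (a + t') + cf_p \<alpha> i) / (cf_q \<alpha> (Suc i) * (a + t') + cf_q \<alpha> i)"
    unfolding t_eq using d1 qpos by (intro frac_subst) (auto intro!: add_pos_nonneg)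
  also have "\<dots> = (cf_p \<alpha> (Suc (Suc i)) + cf_p \<alpha> (Suc i) * t') / (cf_q \<alpha> (Suc (Suc i)) + cf_q \<alpha> (Suc i) * t')"
    by (simp add: a_def algebra_simps)
  finally show ?case unfolding t'_def .
qed

lemma core_pos:
  fixes P Q P' Q' c j D :: int and t \<alpha> :: real
  assumes Q: "Q > 0" "Q' > 0" and t: "t > 0" and al: "\<alpha> = (P + P' * t) / (Q + Q' * t)"
    and D: "P * Q' - P' * Q = D" "D = 1 \<or> D = -1"
    and j: "j > 0"
    and sb: "(j * (P / Q) < c \<and> c < j * \<alpha>) \<or> (j * \<alpha> < c \<and> c < j * (P / Q))"
  shows "Q + Q' \<le> j"
proof -
  have den: "(Q + Q' * t) > 0" using Q t by (simp add: add_pos_pos)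
  have Dr: "real_of_int P * Q' - P' * Q = D" using D(1) by (metis of_int_diff of_int_mult)
  have e1: "(P' - \<alpha> * Q') * (Q + Q' * t) = - D"
    using den Dr unfolding al by (simp add: field_simps; simp add: algebra_simps)
  have e2: "(\<alpha> * Q - P) * (Q + Q' * t) = - D * t"
    using den Dr unfolding al by (simp add: field_simps; simp add: algebra_simps)
  have jr: "real_of_int j > 0" using j by simp
  have Qr: "real_of_int Q > 0" "real_of_int Q' > 0" using Q by auto
  have k00: "Q' * (c * Q - j * P) + Q * (j * P' - c * Q') = j * (P' * Q - P * Q')"
    by (simp add: algebra_simps)
  have "P' * Q - P * Q' = - D" using D(1) by simp
  then have k0: "Q' * (c * Q - j * P) + Q * (j * P' - c * Q') = j * (- D)" using k00 by simp
  show ?thesis using D(2)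
  proof
    assume D1: "D = 1"
    have "(P' - \<alpha> * Q') * (Q + Q' * t) < 0" using e1 D1 by simp
    then have a1: "P' - \<alpha> * Q' < 0" using den by (auto simp: mult_less_0_iff)
    have "(\<alpha> * Q - P) * (Q + Q' * t) < 0" using e2 D1 t by simp
    then have a2: "\<alpha> * Q - P < 0" using den by (auto simp: mult_less_0_iff)
    have ab: "\<alpha> < P / Q" using a2 Qr by (simp add: field_simps)
    have "j * \<alpha> < j * (P / Q)" by (rule mult_strict_left_mono[OF ab jr])
    then have c1: "j * \<alpha> < c" "c < j * (P / Q)" using sb by auto
    have "real_of_int (c * Q) < real_of_int (j * P)" using c1(2) Qr by (simp add: field_simps)
    then have "c * Q < j * P" by (simp only: of_int_less_iff)
    then have i1: "j * P - c * Q \<ge> 1" by linarith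
    have "real_of_int j * real_of_int P' < real_of_int j * (\<alpha> * real_of_int Q')" using a1 by (intro mult_strict_left_mono[OF _ jr]) simp
    also have "\<dots> < real_of_int c * real_of_int Q'" using c1(1) Qr by (simp add: field_simps)
    finally have "real_of_int (j * P') < real_of_int (c * Q')" by simp
    then have "j * P' < c * Q'" by (simp only: of_int_less_iff)
    then have i2: "c * Q' - j * P' \<ge> 1" by linarith
    have "j = Q' * (j * P - c * Q) + Q * (c * Q' - j * P')" using k0 D1 by (simp add: algebra_simps)
    moreover have "Q' * (j * P - c * Q) \<ge> Q'" using i1 Q by simp
    moreover have "Q * (c * Q' - j * P') \<ge> Q" using i2 Q by simp
    ultimately show ?thesis by linarith
  next
    assume D1: "D = -1"
    have "(P' - \<alpha> * Q') * (Q + Q' * t) > 0" using e1 D1 by simp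
    then have a1: "P' - \<alpha> * Q' > 0" using den by (auto simp: zero_less_mult_iff)
    have "(\<alpha> * Q - P) * (Q + Q' * t) > 0" using e2 D1 t by simp
    then have a2: "\<alpha> * Q - P > 0" using den by (auto simp: zero_less_mult_iff)
    have ab: "\<alpha> > P / Q" using a2 Qr by (simp add: field_simps)
    have "j * \<alpha> > j * (P / Q)" by (rule mult_strict_left_mono[OF ab jr])
    then have c1: "j * \<alpha> > c" "c > j * (P / Q)" using sb by auto
    have "real_of_int (c * Q) > real_of_int (j * P)" using c1(2) Qr by (simp add: field_simps)
    then have "c * Q > j * P" by (simp only: of_int_less_iff)
    then have i1: "c * Q - j * P \<ge> 1" by linarith
    have "real_of_int c * real_of_int Q' < real_of_int j * (\<alpha> * real_of_int Q')" using c1(1) Qr by (simp add: field_simps)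
    also have "\<dots> < real_of_int j * real_of_int P'" using a1 by (intro mult_strict_left_mono[OF _ jr]) simp
    finally have "real_of_int (j * P') > real_of_int (c * Q')" by simp
    then have "j * P' > c * Q'" by (simp only: of_int_less_iff)
    then have i2: "j * P' - c * Q' \<ge> 1" by linarith
    have "j = Q' * (c * Q - j * P) + Q * (j * P' - c * Q')" using k0 D1 by (simp add: algebra_simps)
    moreover have "Q' * (c * Q - j * P) \<ge> Q'" using i1 Q by simp
    moreover have "Q * (j * P' - c * Q') \<ge> Q" using i2 Q by simp
    ultimately show ?thesis by linarith
  qed
qed

lemma core_nz:
  fixes P Q P' Q' c j D :: int and t \<alpha> :: real
  assumes Q: "Q > 0" "Q' > 0" and t: "t > 0" and al: "\<alpha> = (P + P' * t) / (Q + Q' * t)"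
    and D: "P * Q' - P' * Q = D" "D = 1 \<or> D = -1"
    and j: "j \<noteq> 0" "\<bar>j\<bar> < Q + Q'"
  shows "\<not> ((j * (P / Q) < c \<and> c < j * \<alpha>) \<or> (j * \<alpha> < c \<and> c < j * (P / Q)))"
proof
  assume sb: "(j * (P / Q) < c \<and> c < j * \<alpha>) \<or> (j * \<alpha> < c \<and> c < j * (P / Q))"
  show False
  proof (cases "j > 0")
    case True
    then show False using core_pos[OF Q t al D True sb] j by simp
  next
    case False
    then have jn: "-j > 0" using j by simp
    have sb': "((-j) * (P / Q) < (-c) \<and> (-c) < (-j) * \<alpha>) \<or> ((-j) * \<alpha> < (-c) \<and> (-c) < (-j) * (P / Q))"
      using sb by auto
    show False using core_pos[OF Q t al D jn sb'] j by simp
  qed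
qed

lemma floor_eq:
  fixes P Q P' Q' j D :: int and t \<alpha> :: real
  assumes Q: "Q > 0" "Q' > 0" and t: "t > 0" and al: "\<alpha> = (P + P' * t) / (Q + Q' * t)"
    and D: "P * Q' - P' * Q = D" "D = 1 \<or> D = -1"
    and irr: "\<alpha> \<notin> \<rat>"
    and j: "j \<noteq> 0" "\<bar>j\<bar> < Q + Q'"
    and cond: "(j > 0 \<and> \<alpha> > P / Q) \<or> (j < 0 \<and> \<alpha> < P / Q) \<or> \<bar>j\<bar> < Q"
  shows "\<lfloor>j * (P / Q)\<rfloor> = \<lfloor>j * \<alpha>\<rfloor>"
proof (rule ccontr)
  assume ne: "\<lfloor>j * (P / Q)\<rfloor> \<noteq> \<lfloor>j * \<alpha>\<rfloor>"
  have jr: "real_of_int j \<noteq> 0" using j by simp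
  have nr: "j * \<alpha> \<noteq> real_of_int c" for c
  proof
    assume "j * \<alpha> = real_of_int c"
    then have "\<alpha> = of_int c / of_int j" using jr by (simp add: field_simps)
    then have "\<alpha> \<in> \<rat>" by simp
    then show False using irr by simp
  qed
  have xy: "j * (P / Q) \<noteq> j * \<alpha>"
  proof
    assume "j * (P / Q) = j * \<alpha>"
    then have "\<alpha> = P / Q" using jr by (metis mult_left_cancel)
    then show False using irr by simp
  qed
  note nsb = core_nz[OF Q t al D j]
  show False
  proof (cases "j * (P / Q) < j * \<alpha>")
    case True
    define c where "c = \<lfloor>j * \<alpha>\<rfloor>"
    have "\<lfloor>j * (P / Q)\<rfloor> \<le> c" unfolding c_def using True by (intro floor_mono) simp
    then have "\<lfloor>j * (P / Q)\<rfloor> < c" using ne c_def by simp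
    then have c1: "j * (P / Q) < c" by (simp add: floor_less_iff)
    have "c \<le> j * \<alpha>" unfolding c_def by simp
    then have c2: "c < j * \<alpha>" using nr[of c] by linarith
    show False using nsb[of c] c1 c2 by blast
  next
    case False
    then have gt: "j * \<alpha> < j * (P / Q)" using xy by linarith
    define c where "c = \<lfloor>j * (P / Q)\<rfloor>"
    have "\<lfloor>j * \<alpha>\<rfloor> \<le> c" unfolding c_def using gt by (intro floor_mono) simp
    then have "\<lfloor>j * \<alpha>\<rfloor> < c" using ne c_def by simp
    then have c1: "j * \<alpha> < c" by (simp add: floor_less_iff)
    have c2: "c \<le> j * (P / Q)" unfolding c_def by simp
    show False
    proof (cases "c = j * (P / Q)")
      case False
      then show False using nsb[of c] c1 c2 by auto
    next
      case True
      have s: "(0 < j \<and> \<alpha> < P / Q) \<or> (j < 0 \<and> P / Q < \<alpha>)"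
      proof (cases "j > 0")
        case True
        then have "real_of_int j > 0" by simp
        then have "\<alpha> < P / Q" using gt by (meson mult_less_cancel_left_pos)
        then show ?thesis using True by simp
      next
        case False
        then have "real_of_int j < 0" using j by simp
        then have "P / Q < \<alpha>" using gt by (meson mult_less_cancel_left_neg)
        then show ?thesis using False j by simp
      qed
      have jq: "\<bar>j\<bar> < Q" using cond s by auto
      have "real_of_int (c * Q) = real_of_int (j * P)" using True Q by (simp add: field_simps)
      then have eq: "c * Q = j * P" by (simp only: of_int_eq_iff)
      have "j * D = Q * (c * Q' - j * P')"
      proof -
        have "j * D = j * P * Q' - j * P' * Q" using D(1) by (simp add: algebra_simps flip: D(1))
        also have "\<dots> = Q * (c * Q' - j * P')" using eq by (simp add: algebra_simps flip: eq)
        finally show ?thesis .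
      qed
      then have "Q dvd j * D" by simp
      then have "Q dvd j" using D(2) by auto
      then have "\<bar>Q\<bar> \<le> \<bar>j\<bar>" using j(1) by (rule dvd_imp_le_int[rotated])
      then show False using jq Q by simp
    qed
  qed
qed

lemma ceil_eq:
  fixes P Q P' Q' j D :: int and t \<alpha> :: real
  assumes Q: "Q > 0" "Q' > 0" and t: "t > 0" and al: "\<alpha> = (P + P' * t) / (Q + Q' * t)"
    and D: "P * Q' - P' * Q = D" "D = 1 \<or> D = -1"
    and irr: "\<alpha> \<notin> \<rat>"
    and j: "j \<noteq> 0" "\<bar>j\<bar> < Q + Q'"
    and cond: "(j > 0 \<and> \<alpha> < P / Q) \<or> (j < 0 \<and> \<alpha> > P / Q) \<or> \<bar>j\<bar> < Q"
  shows "\<lceil>j * (P / Q)\<rceil> = \<lceil>j * \<alpha>\<rceil>"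
proof -
  have j': "-j \<noteq> 0" "\<bar>-j\<bar> < Q + Q'" using j by auto
  have cond': "(-j > 0 \<and> \<alpha> > P / Q) \<or> (-j < 0 \<and> \<alpha> < P / Q) \<or> \<bar>-j\<bar> < Q" using cond by auto
  have "\<lfloor>(-j) * (P / Q)\<rfloor> = \<lfloor>(-j) * \<alpha>\<rfloor>" by (rule floor_eq[OF Q t al D irr j' cond'])
  then show ?thesis unfolding ceiling_def by simp
qed

lemma floor_shift_pos:
  fixes P Q j :: int and e :: real
  assumes "Q > 0" "0 \<le> e" "e < 1 / Q"
  shows "\<lfloor>j * (P / Q) + e\<rfloor> = \<lfloor>j * (P / Q)\<rfloor>"
proof -
  define f where "f = \<lfloor>j * (P / Q)\<rfloor>"
  have Qr: "real_of_int Q > 0" using assms by simp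
  have "j * (P / Q) < f + 1" unfolding f_def by simp
  then have "real_of_int (j * P) < real_of_int (Q * (f + 1))" using Qr by (simp add: field_simps)
  then have "j * P < Q * (f + 1)" by (simp only: of_int_less_iff)
  then have "j * P \<le> Q * (f + 1) - 1" by linarith
  then have "real_of_int (j * P) \<le> real_of_int (Q * (f + 1) - 1)" by (simp only: of_int_le_iff)
  then have "j * (P / Q) \<le> f + 1 - 1 / Q" using Qr by (simp add: field_simps)
  moreover have "f \<le> j * (P / Q)" unfolding f_def by simp
  ultimately show ?thesis unfolding f_def[symmetric] using assms by (simp add: floor_eq_iff)
qed

lemma floor_shift_neg:
  fixes P Q j :: int and e :: real
  assumes "Q > 0" "e < 0" "- (1 / Q) < e"
  shows "\<lfloor>j * (P / Q) + e\<rfloor> = \<lceil>j * (P / Q)\<rceil> - 1"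
proof -
  define g where "g = \<lceil>j * (P / Q)\<rceil>"
  have Qr: "real_of_int Q > 0" using assms by simp
  have "g - 1 < j * (P / Q)" unfolding g_def by linarith
  then have "real_of_int (Q * (g - 1)) < real_of_int (j * P)" using Qr by (simp add: field_simps)
  then have "Q * (g - 1) < j * P" by (simp only: of_int_less_iff)
  then have "Q * (g - 1) + 1 \<le> j * P" by linarith
  then have "real_of_int (Q * (g - 1) + 1) \<le> real_of_int (j * P)" by (simp only: of_int_le_iff)
  then have h: "real_of_int (Q * (g - 1) + 1) / Q \<le> real_of_int (j * P) / Q"
    using Qr by (intro divide_right_mono) simp_all
  have e1: "real_of_int (Q * (g - 1) + 1) / Q = g - 1 + 1 / Q" using Qr by (simp add: field_simps)
  have e2: "real_of_int (j * P) / Q = j * (P / Q)" by simp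
  have "g - 1 + 1 / Q \<le> j * (P / Q)" using h unfolding e1 e2 .
  moreover have "j * (P / Q) \<le> g" unfolding g_def by simp
  ultimately show ?thesis unfolding g_def[symmetric] using assms by (simp add: floor_eq_iff)
qed

lemma v_floor:
  assumes "0 \<le> \<beta>" "\<beta> \<le> 1"
  shows "v_seq \<beta> \<theta> k = of_int (\<lfloor>real_of_int (k + 1) * \<beta> + \<theta>\<rfloor> - \<lfloor>real_of_int k * \<beta> + \<theta>\<rfloor>)"
proof -
  define y where "y = real_of_int k * \<beta> + \<theta>"
  have yy: "real_of_int (k + 1) * \<beta> + \<theta> = (frac y + \<beta>) + of_int \<lfloor>y\<rfloor>"
    unfolding y_def frac_def by (simp add: algebra_simps)
  have fl: "\<lfloor>real_of_int (k + 1) * \<beta> + \<theta>\<rfloor> = \<lfloor>frac y + \<beta>\<rfloor> + \<lfloor>y\<rfloor>"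
    unfolding yy by (simp add: floor_add_int[symmetric])
  have f0: "0 \<le> frac y" "frac y < 1" by (auto simp: frac_lt_1)
  show ?thesis
  proof (cases "frac y + \<beta> \<ge> 1")
    case True
    then have "\<lfloor>frac y + \<beta>\<rfloor> = 1" using f0 assms by (simp add: floor_eq_iff)
    moreover have "frac y \<in> {1 - \<beta>..<1}" using True f0 by auto
    ultimately show ?thesis unfolding v_seq_def fl y_def[symmetric] by simp
  next
    case False
    then have "\<lfloor>frac y + \<beta>\<rfloor> = 0" using f0 assms by (simp add: floor_eq_iff)
    moreover have "frac y \<notin> {1 - \<beta>..<1}" using False f0 by auto
    ultimately show ?thesis unfolding v_seq_def fl y_def[symmetric] by simp
  qed
qed

lemma vt_ceil:
  assumes "0 < \<beta>" "\<beta> \<le> 1"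
  shows "vt_seq \<beta> \<theta> k = of_int (\<lceil>real_of_int (k + 1) * \<beta> + \<theta>\<rceil> - \<lceil>real_of_int k * \<beta> + \<theta>\<rceil>)"
proof -
  define y where "y = real_of_int k * \<beta> + \<theta>"
  have y1: "real_of_int (k + 1) * \<beta> + \<theta> = y + \<beta>" unfolding y_def by (simp add: algebra_simps)
  have yf: "y = of_int \<lfloor>y\<rfloor> + frac y" by (simp add: frac_def)
  have f0: "0 \<le> frac y" "frac y < 1" by (auto simp: frac_lt_1)
  show ?thesis
  proof (cases "frac y = 0")
    case True
    have c1: "\<lceil>y\<rceil> = \<lfloor>y\<rfloor>" using yf True by (simp add: ceiling_eq_iff)
    have c2: "\<lceil>y + \<beta>\<rceil> = \<lfloor>y\<rfloor> + 1" using yf True assms by (simp add: ceiling_eq_iff)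
    show ?thesis unfolding vt_seq_def y_def[symmetric] y1 c1 c2 using True by simp
  next
    case False
    then have fp: "frac y > 0" using f0 by simp
    have c1: "\<lceil>y\<rceil> = \<lfloor>y\<rfloor> + 1" using yf fp f0 by (subst ceiling_eq_iff) linarith
    show ?thesis
    proof (cases "frac y + \<beta> > 1")
      case True
      have c2: "\<lceil>y + \<beta>\<rceil> = \<lfloor>y\<rfloor> + 2" using yf True f0 assms by (subst ceiling_eq_iff) linarith
      have "frac y \<in> {1 - \<beta><..1} \<union> {0}" using True f0 by auto
      then show ?thesis unfolding vt_seq_def y_def[symmetric] y1 c1 c2 by simp
    next
      case False
      have c2: "\<lceil>y + \<beta>\<rceil> = \<lfloor>y\<rfloor> + 1" using yf False fp f0 assms by (subst ceiling_eq_iff) linarith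
      have "frac y \<notin> {1 - \<beta><..1} \<union> {0}" using False fp by auto
      then show ?thesis unfolding vt_seq_def y_def[symmetric] y1 c1 c2 by simp
    qed
  qed
qed

lemma pt_floor:
  fixes P Q P' Q' m k0 F D :: int and t \<alpha> \<beta> \<theta> :: real
  assumes Q: "Q > 0" "Q' > 0" and t: "t > 0" and al: "\<alpha> = (P + P' * t) / (Q + Q' * t)"
    and D: "P * Q' - P' * Q = D" "D = 1 \<or> D = -1"
    and irr: "\<alpha> \<notin> \<rat>"
    and b: "\<beta> = P / Q" and th: "\<theta> = k0 * \<alpha> - F"
    and e: "0 < k0 * (\<alpha> - \<beta>)" "k0 * (\<alpha> - \<beta>) < 1 / Q"
    and jc: "m + k0 \<noteq> 0 \<Longrightarrow> \<bar>m + k0\<bar> < Q + Q' \<and>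
         ((m + k0 > 0 \<and> \<alpha> > P / Q) \<or> (m + k0 < 0 \<and> \<alpha> < P / Q) \<or> \<bar>m + k0\<bar> < Q)"
  shows "\<lfloor>m * \<beta> + \<theta>\<rfloor> = \<lfloor>m * \<alpha> + \<theta>\<rfloor>"
proof -
  define j where "j = m + k0"
  have x1: "m * \<beta> + \<theta> = (j * (P / Q) + k0 * (\<alpha> - \<beta>)) - F"
    unfolding j_def th b by (simp add: algebra_simps add_divide_distrib)
  have x2: "m * \<alpha> + \<theta> = j * \<alpha> - F" unfolding j_def th by (simp add: algebra_simps)
  have "\<lfloor>j * (P / Q) + k0 * (\<alpha> - \<beta>)\<rfloor> = \<lfloor>j * (P / Q)\<rfloor>"
    using floor_shift_pos[OF Q(1)] e by simp
  also have "\<dots> = \<lfloor>j * \<alpha>\<rfloor>"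
  proof (cases "j = 0")
    case True then show ?thesis by simp
  next
    case False
    then show ?thesis using jc unfolding j_def[symmetric]
      by (intro floor_eq[OF Q t al D irr]) auto
  qed
  finally have "\<lfloor>j * (P / Q) + k0 * (\<alpha> - \<beta>)\<rfloor> = \<lfloor>j * \<alpha>\<rfloor>" .
  then show ?thesis unfolding x1 x2 floor_diff_of_int by simp
qed

lemma pt_ceil:
  fixes P Q P' Q' m k0 F D :: int and t \<alpha> \<beta> \<theta> :: real
  assumes Q: "Q > 0" "Q' > 0" and t: "t > 0" and al: "\<alpha> = (P + P' * t) / (Q + Q' * t)"
    and D: "P * Q' - P' * Q = D" "D = 1 \<or> D = -1"
    and irr: "\<alpha> \<notin> \<rat>"
    and b: "\<beta> = P / Q" and th: "\<theta> = k0 * \<alpha> - F"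
    and e: "k0 * (\<alpha> - \<beta>) < 0" "- (1 / Q) < k0 * (\<alpha> - \<beta>)"
    and jc: "m + k0 \<noteq> 0 \<Longrightarrow> \<bar>m + k0\<bar> < Q + Q' \<and>
         ((m + k0 > 0 \<and> \<alpha> < P / Q) \<or> (m + k0 < 0 \<and> \<alpha> > P / Q) \<or> \<bar>m + k0\<bar> < Q)"
  shows "\<lfloor>m * \<beta> + \<theta>\<rfloor> = \<lceil>m * \<alpha> + \<theta>\<rceil> - 1"
proof -
  define j where "j = m + k0"
  have x1: "m * \<beta> + \<theta> = (j * (P / Q) + k0 * (\<alpha> - \<beta>)) - F"
    unfolding j_def th b by (simp add: algebra_simps add_divide_distrib)
  have x2: "m * \<alpha> + \<theta> = j * \<alpha> - F" unfolding j_def th by (simp add: algebra_simps)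
  have "\<lfloor>j * (P / Q) + k0 * (\<alpha> - \<beta>)\<rfloor> = \<lceil>j * (P / Q)\<rceil> - 1"
    using floor_shift_neg[OF Q(1)] e by simp
  also have "\<lceil>j * (P / Q)\<rceil> = \<lceil>j * \<alpha>\<rceil>"
  proof (cases "j = 0")
    case True then show ?thesis by simp
  next
    case False
    then show ?thesis using jc unfolding j_def[symmetric]
      by (intro ceil_eq[OF Q t al D irr]) auto
  qed
  finally have "\<lfloor>j * (P / Q) + k0 * (\<alpha> - \<beta>)\<rfloor> = \<lceil>j * \<alpha>\<rceil> - 1" .
  then show ?thesis unfolding x1 x2 floor_diff_of_int ceiling_diff_of_int by simp
qed

theorem lemma4p9:
  fixes \<alpha> \<theta> :: real and n :: nat and k0 k :: int
  assumes "0 \<le> \<alpha>" "\<alpha> \<le> 1" "\<alpha> \<notin> \<rat>"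
    and "n \<ge> 2"
    and "cf_q \<alpha> (n - 1) \<ge> \<bar>k0\<bar>"
    and "\<theta> = frac (real_of_int k0 * \<alpha>)"
    and "- cf_q \<alpha> n + 1 \<le> k" "k \<le> cf_q \<alpha> n - 2"
  shows "(k0 > 0 \<and> even n \<longrightarrow> v_seq (cf_approx \<alpha> n) \<theta> k = v_seq \<alpha> \<theta> k)
       \<and> (k0 > 0 \<and> odd n \<longrightarrow> v_seq (cf_approx \<alpha> n) \<theta> k = vt_seq \<alpha> \<theta> k)
       \<and> (k0 < 0 \<and> even n \<longrightarrow> v_seq (cf_approx \<alpha> n) \<theta> k = vt_seq \<alpha> \<theta> k)
       \<and> (k0 < 0 \<and> odd n \<longrightarrow> v_seq (cf_approx \<alpha> n) \<theta> k = v_seq \<alpha> \<theta> k)"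
proof -
  note irr = assms(3)
  have a0: "0 < \<alpha>" using assms(1,3) by (metis Rats_0 order_le_less)
  have a1: "\<alpha> < 1" using assms(2,3) by (metis Rats_1 order_le_less)
  obtain N where nN: "n = Suc N" using assms(4) by (cases n) auto
  have N1: "N \<ge> 1" using nN assms(4) by simp
  define P where "P = cf_p \<alpha> n"
  define Q where "Q = cf_q \<alpha> n"
  define P' where "P' = cf_p \<alpha> N"
  define Q' where "Q' = cf_q \<alpha> N"
  define t where "t = cf_rem \<alpha> n"
  define D :: int where "D = (-1) ^ N"
  define \<beta> where "\<beta> = cf_approx \<alpha> n"
  define F where "F = \<lfloor>real_of_int k0 * \<alpha>\<rfloor>"
  have pq: "Q \<ge> 1" "Q' \<ge> 1" "P \<ge> 0" "P \<le> Q"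
    using pq_props[OF irr a0 a1, of N] unfolding P_def Q_def Q'_def nN by auto
  have Q: "Q > 0" "Q' > 0" using pq by auto
  have tp: "t > 0" using rem_props[OF irr a0 a1, of n] unfolding t_def by blast
  have al: "\<alpha> = (P + P' * t) / (Q + Q' * t)"
    using repr[OF irr a0 a1, of N] unfolding P_def Q_def P'_def Q'_def t_def nN .
  have Dd: "P * Q' - P' * Q = D" using det[of \<alpha> N] unfolding P_def Q_def P'_def Q'_def D_def nN .
  have D12: "D = 1 \<or> D = -1" unfolding D_def by (cases "even N") auto
  have par: "even n \<longleftrightarrow> D = -1" unfolding D_def nN by (cases "even N") auto
  have b: "\<beta> = P / Q" unfolding \<beta>_def cf_approx_def P_def Q_def ..
  have Qr: "real_of_int Q > 0" using Q by simp
  have b01: "0 \<le> \<beta>" "\<beta> \<le> 1" unfolding b using pq Qr by (auto simp: field_simps)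
  have th: "\<theta> = k0 * \<alpha> - F" unfolding assms(6) F_def frac_def ..
  have den: "(Q + Q' * t) > 0" using Q tp by (simp add: add_pos_pos)
  have Dr: "real_of_int P * Q' - P' * Q = D" using Dd by (metis of_int_diff of_int_mult)
  have e2: "(\<alpha> * Q - P) * (Q + Q' * t) = - D * t"
    using den Dr unfolding al by (simp add: field_simps; simp add: algebra_simps)
  have sgn1: "D = -1 \<Longrightarrow> \<alpha> > P / Q"
  proof -
    assume D1: "D = -1"
    have "(\<alpha> * Q - P) * (Q + Q' * t) > 0" using e2 D1 tp by simp
    then have "\<alpha> * Q - P > 0" using den by (auto simp: zero_less_mult_iff)
    then show "\<alpha> > P / Q" using Qr by (simp add: field_simps)
  qed
  have sgn2: "D = 1 \<Longrightarrow> \<alpha> < P / Q"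
  proof -
    assume D1: "D = 1"
    have "(\<alpha> * Q - P) * (Q + Q' * t) < 0" using e2 D1 tp by simp
    then have "\<alpha> * Q - P < 0" using den by (auto simp: mult_less_0_iff)
    then show "\<alpha> < P / Q" using Qr by (simp add: field_simps)
  qed
  have k0Q: "\<bar>k0\<bar> \<le> Q'" using assms(5) nN Q'_def by simp
  define e where "e = k0 * (\<alpha> - \<beta>)"
  have eb: "\<bar>e\<bar> < 1 / Q"
  proof -
    have "\<bar>(\<alpha> * Q - P) * (Q + Q' * t)\<bar> = \<bar>- D * t\<bar>" by (rule arg_cong[where f=abs, OF e2])
    then have "\<bar>\<alpha> * Q - P\<bar> * (Q + Q' * t) = t" using D12 tp den by (auto simp: abs_mult)
    moreover have "\<bar>\<alpha> * Q - P\<bar> = \<bar>\<alpha> - \<beta>\<bar> * Q"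
    proof -
      have "(\<alpha> - \<beta>) * Q = \<alpha> * Q - P" unfolding b using Qr by (simp add: field_simps)
      then show ?thesis using Qr by (metis abs_mult abs_of_pos)
    qed
    ultimately have h1: "\<bar>\<alpha> - \<beta>\<bar> * Q * (Q + Q' * t) = t" by simp
    have ee: "\<bar>e\<bar> = \<bar>k0\<bar> * \<bar>\<alpha> - \<beta>\<bar>" by (simp add: e_def abs_mult)
    have "\<bar>e\<bar> * Q * (Q + Q' * t) = \<bar>k0\<bar> * (\<bar>\<alpha> - \<beta>\<bar> * Q * (Q + Q' * t))" unfolding ee
      by (simp only: mult.assoc)
    also have "\<dots> = \<bar>k0\<bar> * t" unfolding h1 ..
    also have "\<dots> \<le> Q' * t" using k0Q tp by (intro mult_right_mono) simp_all
    also have "\<dots> < Q + Q' * t" using Qr by simp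
    finally have "(\<bar>e\<bar> * Q) * (Q + Q' * t) < 1 * (Q + Q' * t)" by simp
    then have "\<bar>e\<bar> * Q < 1" using den by (meson mult_less_cancel_right_pos)
    then show ?thesis using Qr by (simp add: field_simps)
  qed
  note vf = v_floor[OF b01] v_floor[of \<alpha>] 
  note vc = vt_ceil[of \<alpha>]
  have A: "v_seq \<beta> \<theta> k = v_seq \<alpha> \<theta> k" if k0p: "k0 > 0" and ev: "even n"
  proof -
    have ab: "\<alpha> > P / Q" using sgn1 par ev by simp
    have ep: "0 < e" unfolding e_def using ab k0p b by simp
    have hm: "\<lfloor>m * \<beta> + \<theta>\<rfloor> = \<lfloor>m * \<alpha> + \<theta>\<rfloor>" if "m = k \<or> m = k + 1" for m
      using that assms(7,8) k0Q k0p ab unfolding Q_def[symmetric]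
      by (intro pt_floor[OF Q tp al Dd D12 irr b th]) (use ep eb e_def in auto)
    have h0: "\<lfloor>k * \<beta> + \<theta>\<rfloor> = \<lfloor>k * \<alpha> + \<theta>\<rfloor>" by (rule hm) simp
    have h1: "\<lfloor>real_of_int (k + 1) * \<beta> + \<theta>\<rfloor> = \<lfloor>real_of_int (k + 1) * \<alpha> + \<theta>\<rfloor>" by (rule hm) simp
    show ?thesis unfolding v_floor[OF b01, of \<theta> k] v_floor[of \<alpha> \<theta> k, OF less_imp_le[OF a0] assms(2)] h0 h1 ..
  qed
  have B: "v_seq \<beta> \<theta> k = vt_seq \<alpha> \<theta> k" if k0p: "k0 > 0" and ev: "odd n"
  proof -
    have "D = 1" using par ev D12 by auto
    then have ab: "\<alpha> < P / Q" using sgn2 by simp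
    have ep: "e < 0" unfolding e_def using ab k0p b by (simp add: mult_pos_neg)
    have hm: "\<lfloor>m * \<beta> + \<theta>\<rfloor> = \<lceil>m * \<alpha> + \<theta>\<rceil> - 1" if "m = k \<or> m = k + 1" for m
      using that assms(7,8) k0Q k0p ab unfolding Q_def[symmetric]
      by (intro pt_ceil[OF Q tp al Dd D12 irr b th]) (use ep eb e_def in auto)
    have h0: "\<lfloor>k * \<beta> + \<theta>\<rfloor> = \<lceil>k * \<alpha> + \<theta>\<rceil> - 1" by (rule hm) simp
    have h1: "\<lfloor>real_of_int (k + 1) * \<beta> + \<theta>\<rfloor> = \<lceil>real_of_int (k + 1) * \<alpha> + \<theta>\<rceil> - 1" by (rule hm) simp
    show ?thesis unfolding v_floor[OF b01, of \<theta> k] vt_ceil[of \<alpha> \<theta> k, OF a0 assms(2)] h0 h1 by simp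
  qed
  have C: "v_seq \<beta> \<theta> k = vt_seq \<alpha> \<theta> k" if k0p: "k0 < 0" and ev: "even n"
  proof -
    have ab: "\<alpha> > P / Q" using sgn1 par ev by simp
    have ep: "e < 0" unfolding e_def using ab k0p b by (simp add: mult_neg_pos)
    have hm: "\<lfloor>m * \<beta> + \<theta>\<rfloor> = \<lceil>m * \<alpha> + \<theta>\<rceil> - 1" if "m = k \<or> m = k + 1" for m
      using that assms(7,8) k0Q k0p ab unfolding Q_def[symmetric]
      by (intro pt_ceil[OF Q tp al Dd D12 irr b th]) (use ep eb e_def in auto)
    have h0: "\<lfloor>k * \<beta> + \<theta>\<rfloor> = \<lceil>k * \<alpha> + \<theta>\<rceil> - 1" by (rule hm) simp
    have h1: "\<lfloor>real_of_int (k + 1) * \<beta> + \<theta>\<rfloor> = \<lceil>real_of_int (k + 1) * \<alpha> + \<theta>\<rceil> - 1" by (rule hm) simp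
    show ?thesis unfolding v_floor[OF b01, of \<theta> k] vt_ceil[of \<alpha> \<theta> k, OF a0 assms(2)] h0 h1 by simp
  qed
  have D': "v_seq \<beta> \<theta> k = v_seq \<alpha> \<theta> k" if k0p: "k0 < 0" and ev: "odd n"
  proof -
    have "D = 1" using par ev D12 by auto
    then have ab: "\<alpha> < P / Q" using sgn2 by simp
    have ep: "0 < e" unfolding e_def using ab k0p b by (simp add: mult_neg_neg)
    have hm: "\<lfloor>m * \<beta> + \<theta>\<rfloor> = \<lfloor>m * \<alpha> + \<theta>\<rfloor>" if "m = k \<or> m = k + 1" for m
      using that assms(7,8) k0Q k0p ab unfolding Q_def[symmetric]
      by (intro pt_floor[OF Q tp al Dd D12 irr b th]) (use ep eb e_def in auto)
    have h0: "\<lfloor>k * \<beta> + \<theta>\<rfloor> = \<lfloor>k * \<alpha> + \<theta>\<rfloor>" by (rule hm) simp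
    have h1: "\<lfloor>real_of_int (k + 1) * \<beta> + \<theta>\<rfloor> = \<lfloor>real_of_int (k + 1) * \<alpha> + \<theta>\<rfloor>" by (rule hm) simp
    show ?thesis unfolding v_floor[OF b01, of \<theta> k] v_floor[of \<alpha> \<theta> k, OF less_imp_le[OF a0] assms(2)] h0 h1 ..
  qed
  show ?thesis using A B C D' unfolding \<beta>_def by blast
qed

end
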